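(* Let $f\colon V_0\to\mathbb{R}$ be continuous such that $\Gamma_f$ is a ruled surface. Let $R_1,R_2$ be distinct rulings of $\Gamma_f$ with $w_z(R_1)<w_z(R_2)$. Then $g_{R_1}(x)\le g_{R_2}(x)$ for all $x\in\mathbb{R}$ and $m(R_1)\ge m(R_2)$.
   Context: $\mathbb{H}$ is $\mathbb{R}^3$ with product $(x,y,z)\cdot(x',y',z')=(x+x',y+y',z+z'+\frac{xy'-yx'}{2})$; $X=(1,0,0)$, $Y=(0,1,0)$, $v^t=tv$. A horizontal line is $\{p\cdot tv\}$ with $v=(a,b,0)\ne0$, slope $b/a$; a ruled surface is a union of horizontal line segments (rulings) with endpoints in its boundary; since $\Gamma_f$ is entire, its rulings are horizontal lines, each of the form $\{w\cdot(X+mY)^t:t\in\mathbb{R}\}$. $V_0=\{(x,0,z)\}$, $\Gamma_f=\{u\cdot Y^{f(u)}:u\in V_0\}$, $\Pi(x,y,z)=(x,0,z-\frac{xy}2)$. For a ruling $R$: $m(R)$ is its slope, $w(R)=(0,w_y(R),w_z(R))$ is its intersection with the $yz$-plane, and $g_R(x)=w_z(R)-w_y(R)x-\frac{m(R)}2x^2$, so that $\Pi(R)=\{(x,0,g_R(x)):x\in\mathbb{R}\}$. *)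

theory Defs
  imports "HOL-Analysis.Analysis"
begin

type_synonym heis = "real \<times> real \<times> real"

definition hmul :: "heis \<Rightarrow> heis \<Rightarrow> heis" where
  "hmul p q = (case p of (x, y, z) \<Rightarrow> case q of (x', y', z') \<Rightarrow>
     (x + x', y + y', z + z' + (x * y' - y * x') / 2))"

definition hpow :: "heis \<Rightarrow> real \<Rightarrow> heis" where
  "hpow v t = (case v of (a, b, c) \<Rightarrow> (t * a, t * b, t * c))"

definition horizontal_line :: "heis set \<Rightarrow> bool" where
  "horizontal_line L \<longleftrightarrow> (\<exists>p a b. (a, b) \<noteq> (0, 0) \<and>
     L = {hmul p (hpow (a, b, 0) t) | t. True})"

text \<open>Intrinsic graph of f : V_0 \<rightarrow> R, where V_0 = {(x,0,z)} is identified with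
  pairs (x,z).\<close>
definition intrinsic_graph :: "(real \<times> real \<Rightarrow> real) \<Rightarrow> heis set" where
  "intrinsic_graph f = {hmul (x, 0, z) (hpow (0, 1, 0) (f (x, z))) | x z. True}"

text \<open>A ruling decomposition: a family of horizontal lines whose union is the surface
  (since the graph is entire, rulings are full horizontal lines).\<close>
definition ruling_family :: "heis set set \<Rightarrow> heis set \<Rightarrow> bool" where
  "ruling_family \<R> S \<longleftrightarrow> (\<forall>R\<in>\<R>. horizontal_line R) \<and> \<Union>\<R> = S"

definition ruled_surface :: "heis set \<Rightarrow> bool" where
  "ruled_surface S \<longleftrightarrow> (\<exists>\<R>. ruling_family \<R> S)"

definition slope :: "heis set \<Rightarrow> real" where
  "slope R = (THE m. \<exists>p. R = {hmul p (hpow (1, m, 0) t) | t. True})"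

definition wpt :: "heis set \<Rightarrow> heis" where
  "wpt R = (THE w. w \<in> R \<and> fst w = 0)"

definition w_y :: "heis set \<Rightarrow> real" where
  "w_y R = fst (snd (wpt R))"

definition w_z :: "heis set \<Rightarrow> real" where
  "w_z R = snd (snd (wpt R))"

definition g_R :: "heis set \<Rightarrow> real \<Rightarrow> real" where
  "g_R R x = w_z R - w_y R * x - slope R / 2 * x\<^sup>2"

end

theory Submission
  imports Defs
begin

lemma graph_mem:
  assumes "(x, y, z) \<in> intrinsic_graph f"
  shows "y = f (x, z - x * y / 2)"
  using assms by (auto simp: intrinsic_graph_def hmul_def hpow_def)

lemma line_form:
  assumes "horizontal_line R" "R \<subseteq> intrinsic_graph f"
  shows "\<exists>b c m. R = range (\<lambda>s. (s, b + m * s, c - b * s/2))"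
proof -
  obtain p a b' where ab: "(a, b') \<noteq> (0, 0)" and R: "R = {hmul p (hpow (a, b', 0) t) | t. True}"
    using assms(1) unfolding horizontal_line_def by blast
  obtain px py pz where p: "p = (px, py, pz)" by (cases p) auto
  have mem: "hmul p (hpow (a, b', 0) t) \<in> intrinsic_graph f" for t
    using assms(2) R by blast
  have pt: "hmul p (hpow (a, b', 0) t) = (px + t*a, py + t*b', pz + (px*(t*b') - py*(t*a))/2)" for t
    by (simp add: p hmul_def hpow_def)
  show ?thesis
  proof (cases "a = 0")
    case True
    then have b0: "b' \<noteq> 0" using ab by auto
    have 1: "py = f (px, pz - px*py/2)" using graph_mem[OF mem[of 0, unfolded pt]] by simp
    have 2: "py + b' = f (px, pz + (px*b')/2 - px*(py+b')/2)"
      using graph_mem[OF mem[of 1, unfolded pt]] True by simp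
    have "pz + (px*b')/2 - px*(py+b')/2 = pz - px*py/2" by (simp add: algebra_simps)
    with 1 2 b0 show ?thesis by simp
  next
    case False
    define m where "m = b'/a"
    define b where "b = py - m*px"
    define c where "c = pz + b*px/2"
    have "R = range (\<lambda>s. (s, b + m * s, c - b * s/2))"
    proof (intro set_eqI iffI)
      fix q assume "q \<in> R"
      then obtain t where q: "q = hmul p (hpow (a, b', 0) t)" using R by blast
      show "q \<in> range (\<lambda>s. (s, b + m * s, c - b * s/2))"
      proof (rule image_eqI[of _ _ "px + t*a"])
        show "q = (px + t * a, b + m * (px + t * a), c - b * (px + t * a) / 2)"
          using False by (simp add: q pt m_def b_def c_def field_simps)
      qed simp
    next
      fix q assume "q \<in> range (\<lambda>s. (s, b + m * s, c - b * s/2))"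
      then obtain s where q: "q = (s, b + m * s, c - b * s/2)" by blast
      have "q = hmul p (hpow (a, b', 0) ((s - px)/a))"
        using False by (simp add: q pt m_def b_def c_def field_simps)
      then show "q \<in> R" using R by blast
    qed
    then show ?thesis by blast
  qed
qed

lemma slope_form:
  assumes "R = range (\<lambda>s. (s, b + m * s, c - b * s/2))"
  shows "slope R = m"
  unfolding slope_def
proof (rule the_equality)
  show "\<exists>p. R = {hmul p (hpow (1, m, 0) t) |t. True}"
    by (rule exI[of _ "(0, b, c)"]) (auto simp: assms hmul_def hpow_def algebra_simps)
next
  fix m' assume "\<exists>p. R = {hmul p (hpow (1, m', 0) t) |t. True}"
  then obtain px py pz where R': "R = {hmul (px,py,pz) (hpow (1, m', 0) t) |t. True}" by auto
  have pt: "hmul (px,py,pz) (hpow (1, m', 0) t) = (px + t, py + t*m', pz + (px*(t*m') - py*t)/2)" for t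
    by (simp add: hmul_def hpow_def)
  have "(px + t, py + t*m', pz + (px*(t*m') - py*t)/2) \<in> R" for t
    unfolding R' pt[symmetric] by blast
  then have "py + t*m' = b + m*(px+t)" for t unfolding assms by auto
  from this[of 0] this[of 1] show "m' = m" by (simp add: algebra_simps)
qed

lemma wpt_form:
  assumes "R = range (\<lambda>s. (s, b + m * s, c - b * s/2))"
  shows "wpt R = (0, b, c)"
  unfolding wpt_def
  by (rule the_equality) (auto simp: assms)

lemma key:
  fixes C B M :: real
  assumes C: "C < 0"
    and root: "\<And>s. C - B * s - M/2 * s^2 = 0 \<Longrightarrow> B + M * s = 0"
  shows "(\<forall>s. C - B * s - M/2 * s^2 \<le> 0) \<and> M \<ge> 0"
proof (cases "M = 0")
  case True
  have "B = 0"
  proof (rule ccontr)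
    assume "B \<noteq> 0"
    then have "C - B*(C/B) - M/2*(C/B)^2 = 0" using True by simp
    from root[OF this] True \<open>B \<noteq> 0\<close> show False by simp
  qed
  then show ?thesis using True C by simp
next
  case False
  define s0 where "s0 = -B/M"
  define D where "D = C + B^2/(2*M)"
  have form: "C - B * s - M/2 * s^2 = D - M/2*(s - s0)^2" for s
    using False by (simp add: D_def s0_def field_simps power2_eq_square)
  have noroot: "\<not> (D / M > 0)"
  proof
    assume pos: "D / M > 0"
    define s1 where "s1 = s0 + sqrt (2*D/M)"
    have sq: "(sqrt (2*D/M))^2 = 2*D/M" using pos by simp
    have "C - B * s1 - M/2 * s1^2 = 0"
      unfolding form s1_def using sq False by (simp add: field_simps)
    from root[OF this] have "B + M * s1 = 0" .
    moreover have "B + M * s1 = M * sqrt (2*D/M)"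
      using False by (simp add: s1_def s0_def field_simps)
    moreover have "sqrt (2*D/M) > 0" using pos by simp
    ultimately show False using False by simp
  qed
  have Mpos: "M > 0"
  proof (rule ccontr)
    assume "\<not> M > 0"
    with False have "M < 0" by simp
    then have "B^2/(2*M) \<le> 0" by (simp add: divide_nonneg_neg)
    then have "D < 0" using C D_def by simp
    with \<open>M < 0\<close> have "D / M > 0" by (simp add: divide_neg_neg)
    with noroot show False by simp
  qed
  have "D \<le> 0" using noroot Mpos by (meson divide_pos_pos not_le)
  have "\<forall>s. C - B * s - M/2 * s^2 \<le> 0"
  proof
    fix s
    have "M/2 * (s - s0)^2 \<ge> 0" using Mpos by simp
    then show "C - B * s - M/2 * s^2 \<le> 0" unfolding form using \<open>D \<le> 0\<close> by linarith
  qed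
  then show ?thesis using Mpos by simp
qed

theorem lemma4p2:
  fixes f :: "real \<times> real \<Rightarrow> real" and \<R> :: "heis set set" and R1 R2 :: "heis set"
  assumes "continuous_on UNIV f"
    and "ruled_surface (intrinsic_graph f)"
    and "ruling_family \<R> (intrinsic_graph f)"
    and "R1 \<in> \<R>" and "R2 \<in> \<R>" and "R1 \<noteq> R2"
    and "w_z R1 < w_z R2"
  shows "(\<forall>x. g_R R1 x \<le> g_R R2 x) \<and> slope R1 \<ge> slope R2"
proof -
  have h1: "horizontal_line R1" "R1 \<subseteq> intrinsic_graph f"
    using assms(3,4) unfolding ruling_family_def by auto
  have h2: "horizontal_line R2" "R2 \<subseteq> intrinsic_graph f"
    using assms(3,5) unfolding ruling_family_def by auto
  obtain b1 c1 m1 where R1: "R1 = range (\<lambda>s. (s, b1 + m1 * s, c1 - b1 * s/2))"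
    using line_form[OF h1] by blast
  obtain b2 c2 m2 where R2: "R2 = range (\<lambda>s. (s, b2 + m2 * s, c2 - b2 * s/2))"
    using line_form[OF h2] by blast
  have g1: "g_R R1 x = c1 - b1*x - m1/2*x^2" for x
    by (simp add: g_R_def w_y_def w_z_def wpt_form[OF R1] slope_form[OF R1])
  have g2: "g_R R2 x = c2 - b2*x - m2/2*x^2" for x
    by (simp add: g_R_def w_y_def w_z_def wpt_form[OF R2] slope_form[OF R2])
  have c12: "c1 < c2" using assms(7)
    by (simp add: w_z_def wpt_form[OF R1] wpt_form[OF R2])
  have f1: "b1 + m1 * s = f (s, c1 - b1 * s - m1/2 * s^2)" for s
  proof -
    have "(s, b1 + m1 * s, c1 - b1 * s/2) \<in> intrinsic_graph f" using h1(2) R1 by blast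
    from graph_mem[OF this] have "b1 + m1 * s = f (s, c1 - b1 * s / 2 - s * (b1 + m1 * s) / 2)" .
    moreover have "c1 - b1 * s / 2 - s * (b1 + m1 * s) / 2 = c1 - b1 * s - m1/2 * s^2"
      by (simp add: algebra_simps power2_eq_square)
    ultimately show ?thesis by simp
  qed
  have f2: "b2 + m2 * s = f (s, c2 - b2 * s - m2/2 * s^2)" for s
  proof -
    have "(s, b2 + m2 * s, c2 - b2 * s/2) \<in> intrinsic_graph f" using h2(2) R2 by blast
    from graph_mem[OF this] have "b2 + m2 * s = f (s, c2 - b2 * s / 2 - s * (b2 + m2 * s) / 2)" .
    moreover have "c2 - b2 * s / 2 - s * (b2 + m2 * s) / 2 = c2 - b2 * s - m2/2 * s^2"
      by (simp add: algebra_simps power2_eq_square)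
    ultimately show ?thesis by simp
  qed
  have root: "(b1 - b2) + (m1 - m2) * s = 0"
    if "(c1 - c2) - (b1 - b2) * s - (m1 - m2)/2 * s^2 = 0" for s
  proof -
    have "c1 - b1 * s - m1/2 * s^2 = c2 - b2 * s - m2/2 * s^2" using that by (simp add: field_simps)
    then have "b1 + m1 * s = b2 + m2 * s" using f1[of s] f2[of s] by simp
    then show ?thesis by (simp add: algebra_simps)
  qed
  have "(\<forall>s. (c1 - c2) - (b1 - b2) * s - (m1 - m2)/2 * s^2 \<le> 0) \<and> m1 - m2 \<ge> 0"
    by (rule key) (use c12 root in auto)
  then have A: "\<And>s. (c1 - c2) - (b1 - b2) * s - (m1 - m2)/2 * s^2 \<le> 0" and B: "m1 \<ge> m2" by auto
  have "g_R R1 x \<le> g_R R2 x" for x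
  proof -
    have "g_R R1 x - g_R R2 x = (c1 - c2) - (b1 - b2) * x - (m1 - m2)/2 * x^2"
      by (simp add: g1 g2 field_simps)
    with A[of x] show ?thesis by linarith
  qed
  then show ?thesis using B by (simp add: slope_form[OF R1] slope_form[OF R2])
qed

end
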